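(* For any adversary $\mathsf{A}$ against the IND-CPA security of CTRU.PKE, there exist adversaries $\mathsf{B}$ and $\mathsf{C}$ (with the same running time as $\mathsf{A}$) such that $$\mathbf{Adv}^{\text{IND-CPA}}_{\text{CTRU.PKE}}(\mathsf{A})\le\mathbf{Adv}^{\text{NTRU}}_{\mathcal{R}_q,\Psi_1}(\mathsf{B})+\mathbf{Adv}^{\text{RLWE}}_{\mathcal{R}_q,\Psi_2}(\mathsf{C}).$$
   Context: $n$ is a positive integer of the form $3^l2^e$ divisible by $8$; $\mathcal{R}_q=\mathbb{Z}_q[x]/(x^n-x^{n/2}+1)$; $q,q_2$ positive integers with $q_2<q$, $\gcd(q,2)=1$; $\Psi_1,\Psi_2$ distributions over $\mathbb{Z}[x]/(x^n-x^{n/2}+1)$. $\lfloor x\rceil$ is coefficient-wise rounding to the nearest integer. Message space $\mathcal{M}=\{0,1\}^{n/2}$. $\mathrm{PolyEncode}(m)$: with $\mathbf{H}$ the $4\times8$ binary matrix with rows $(1,1,1,1,0,0,0,0)$, $(0,0,1,1,1,1,0,0)$, $(0,0,0,0,1,1,1,1)$, $(0,1,0,1,0,1,0,1)$, split $m$ into quadruples $\mathbf{k}_i=(m_{4i},\dots,m_{4i+3})$ and set coefficients $8i,\dots,8i+7$ to $\frac{q}{2}(\mathbf{k}_i\mathbf{H}\bmod2)$. CTRU.PKE: KeyGen: $f',g\leftarrow\Psi_1$, $f:=2f'+1$; restart if $f$ is not invertible in $\mathcal{R}_q$; $h:=g/f\in\mathcal{R}_q$; $pk=h$, $sk=f$.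 Enc$(h,m)$: $r,e\leftarrow\Psi_2$; $\sigma:=hr+e$; $c:=\lfloor\frac{q_2}{q}(\sigma+\lfloor\mathrm{PolyEncode}(m)\rceil)\rceil\bmod q_2$. (Decryption is irrelevant here.) IND-CPA advantage: $\mathbf{Adv}^{\text{IND-CPA}}_{\text{PKE}}(\mathsf{A})=\big|\Pr[b'=b]-\frac12\big|$ in the experiment $(pk,sk)\leftarrow\mathrm{KeyGen}()$; $(m_0,m_1,s)\leftarrow\mathsf{A}(pk)$; $b\xleftarrow{\$}\{0,1\}$; $c^*\leftarrow\mathrm{Enc}(pk,m_b)$; $b'\leftarrow\mathsf{A}(s,c^* )$. NTRU advantage: $\mathbf{Adv}^{\text{NTRU}}_{\mathcal{R}_q,\Psi_1}(\mathsf{B})=|\Pr[\mathsf{B}(h)=1]-\Pr[\mathsf{B}(u)=1]|$ where $h=g/f$ is distributed as the public key above ($g\leftarrow\Psi_1$, $f=2f'+1$ with $f'\leftarrow\Psi_1$, conditioned on $f$ invertible in $\mathcal{R}_q$) and $u$ is uniform in $\mathcal{R}_q$. RLWE advantage: $\mathbf{Adv}^{\text{RLWE}}_{\mathcal{R}_q,\Psi_2}(\mathsf{C})=|\Pr[\mathsf{C}(h,hr+e)=1]-\Pr[\mathsf{C}(h,u)=1]|$ where $h,u$ are uniform in $\mathcal{R}_q$ and $r,e\leftarrow\Psi_2$. *)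

theory Defs
  imports "HOL-Probability.Probability" "HOL-Computational_Algebra.Polynomial"
begin

text \<open>Elements of Z[x]/(x^n - x^(n/2) + 1) are represented by integer polynomials;
  elements of R_q by their canonical representatives: remainder modulo the (monic)
  modulus polynomial, with every coefficient reduced into [0, q).\<close>

definition ctru_phi :: "nat \<Rightarrow> int poly" where
  "ctru_phi n = monom 1 n - monom 1 (n div 2) + 1"

definition rq_red :: "int \<Rightarrow> nat \<Rightarrow> int poly \<Rightarrow> int poly" where
  "rq_red q n p = map_poly (\<lambda>c. c mod q) (pseudo_mod p (ctru_phi n))"

definition rq_carrier :: "int \<Rightarrow> nat \<Rightarrow> int poly set" where
  "rq_carrier q n = range (rq_red q n)"

definition rq_add :: "int \<Rightarrow> nat \<Rightarrow> int poly \<Rightarrow> int poly \<Rightarrow> int poly" where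
  "rq_add q n a b = rq_red q n (a + b)"

definition rq_mult :: "int \<Rightarrow> nat \<Rightarrow> int poly \<Rightarrow> int poly \<Rightarrow> int poly" where
  "rq_mult q n a b = rq_red q n (a * b)"

definition rq_invertible :: "int \<Rightarrow> nat \<Rightarrow> int poly \<Rightarrow> bool" where
  "rq_invertible q n f = (\<exists>g. rq_mult q n f g = rq_red q n 1)"

definition rq_inv :: "int \<Rightarrow> nat \<Rightarrow> int poly \<Rightarrow> int poly" where
  "rq_inv q n f = (SOME g. g \<in> rq_carrier q n \<and> rq_mult q n f g = rq_red q n 1)"

definition rq_div :: "int \<Rightarrow> nat \<Rightarrow> int poly \<Rightarrow> int poly \<Rightarrow> int poly" where
  "rq_div q n g f = rq_mult q n g (rq_inv q n f)"

definition rq_uniform :: "int \<Rightarrow> nat \<Rightarrow> int poly pmf" where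
  "rq_uniform q n = pmf_of_set (rq_carrier q n)"

definition ctru_H :: "int list list" where
  "ctru_H = [[1,1,1,1,0,0,0,0],
             [0,0,1,1,1,1,0,0],
             [0,0,0,0,1,1,1,1],
             [0,1,0,1,0,1,0,1]]"

text \<open>Coefficient k of PolyEncode(m): for k = 8i + j (j < 8), it is
  (q/2) * ((k_i H mod 2)_j) with k_i = (m_{4i},...,m_{4i+3}).\<close>
definition poly_encode_coeff :: "int \<Rightarrow> nat \<Rightarrow> bool list \<Rightarrow> nat \<Rightarrow> real" where
  "poly_encode_coeff q n m k =
     (if k < n then
        real_of_int q / 2 *
        of_int ((\<Sum>t<4. of_bool (m ! (4 * (k div 8) + t)) * (ctru_H ! t ! (k mod 8))) mod 2)
      else 0)"

definition poly_encode_round :: "int \<Rightarrow> nat \<Rightarrow> bool list \<Rightarrow> int poly" where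
  "poly_encode_round q n m = Poly (map (\<lambda>k. round (poly_encode_coeff q n m k)) [0..<n])"

definition ctru_compress :: "int \<Rightarrow> int \<Rightarrow> int poly \<Rightarrow> int poly" where
  "ctru_compress q q2 x =
     map_poly (\<lambda>a. round (real_of_int q2 / real_of_int q * real_of_int a) mod q2) x"

text \<open>KeyGen with restart = conditioning on invertibility of f = 2f'+1. Returns (pk, sk).\<close>
definition ctru_keygen :: "int \<Rightarrow> nat \<Rightarrow> int poly pmf \<Rightarrow> (int poly \<times> int poly) pmf" where
  "ctru_keygen q n \<Psi>1 =
     do { (f', g) \<leftarrow> cond_pmf (pair_pmf \<Psi>1 \<Psi>1) {(f', g). rq_invertible q n (2 * f' + 1)};
          let f = rq_red q n (2 * f' + 1);
          return_pmf (rq_div q n (rq_red q n g) f, f) }"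

definition ctru_enc :: "int \<Rightarrow> int \<Rightarrow> nat \<Rightarrow> int poly pmf \<Rightarrow> int poly \<Rightarrow> bool list \<Rightarrow> int poly pmf" where
  "ctru_enc q q2 n \<Psi>2 h m =
     do { r \<leftarrow> \<Psi>2; e \<leftarrow> \<Psi>2;
          let \<sigma> = rq_add q n (rq_mult q n h r) e;
          return_pmf (ctru_compress q q2 (\<sigma> + poly_encode_round q n m)) }"

definition ind_cpa_game ::
  "int \<Rightarrow> int \<Rightarrow> nat \<Rightarrow> int poly pmf \<Rightarrow> int poly pmf \<Rightarrow>
   (int poly \<Rightarrow> (bool list \<times> bool list \<times> 's) pmf) \<Rightarrow> ('s \<Rightarrow> int poly \<Rightarrow> bool pmf) \<Rightarrow> bool pmf" where
  "ind_cpa_game q q2 n \<Psi>1 \<Psi>2 A1 A2 =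
     do { (pk, sk) \<leftarrow> ctru_keygen q n \<Psi>1;
          (m0, m1, s) \<leftarrow> A1 pk;
          b \<leftarrow> bernoulli_pmf (1/2);
          c \<leftarrow> ctru_enc q q2 n \<Psi>2 pk (if b then m1 else m0);
          b' \<leftarrow> A2 s c;
          return_pmf (b' = b) }"

definition adv_ind_cpa ::
  "int \<Rightarrow> int \<Rightarrow> nat \<Rightarrow> int poly pmf \<Rightarrow> int poly pmf \<Rightarrow>
   (int poly \<Rightarrow> (bool list \<times> bool list \<times> 's) pmf) \<Rightarrow> ('s \<Rightarrow> int poly \<Rightarrow> bool pmf) \<Rightarrow> real" where
  "adv_ind_cpa q q2 n \<Psi>1 \<Psi>2 A1 A2 = \<bar>pmf (ind_cpa_game q q2 n \<Psi>1 \<Psi>2 A1 A2) True - 1/2\<bar>"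

definition adv_ntru :: "int \<Rightarrow> nat \<Rightarrow> int poly pmf \<Rightarrow> (int poly \<Rightarrow> bool pmf) \<Rightarrow> real" where
  "adv_ntru q n \<Psi>1 B =
     \<bar>pmf (bind_pmf (map_pmf fst (ctru_keygen q n \<Psi>1)) B) True
      - pmf (bind_pmf (rq_uniform q n) B) True\<bar>"

definition adv_rlwe :: "int \<Rightarrow> nat \<Rightarrow> int poly pmf \<Rightarrow> (int poly \<Rightarrow> int poly \<Rightarrow> bool pmf) \<Rightarrow> real" where
  "adv_rlwe q n \<Psi>2 C =
     \<bar>pmf (do { h \<leftarrow> rq_uniform q n; r \<leftarrow> \<Psi>2; e \<leftarrow> \<Psi>2;
                C h (rq_add q n (rq_mult q n h r) e) }) True
      - pmf (do { h \<leftarrow> rq_uniform q n; u \<leftarrow> rq_uniform q n; C h u }) True\<bar>"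

section \<open>The black-box reductions (each runs A once plus one encryption-like step)\<close>

definition ntru_reduction ::
  "int \<Rightarrow> int \<Rightarrow> nat \<Rightarrow> int poly pmf \<Rightarrow>
   (int poly \<Rightarrow> (bool list \<times> bool list \<times> 's) pmf) \<Rightarrow> ('s \<Rightarrow> int poly \<Rightarrow> bool pmf) \<Rightarrow>
   int poly \<Rightarrow> bool pmf" where
  "ntru_reduction q q2 n \<Psi>2 A1 A2 h =
     do { (m0, m1, s) \<leftarrow> A1 h;
          b \<leftarrow> bernoulli_pmf (1/2);
          c \<leftarrow> ctru_enc q q2 n \<Psi>2 h (if b then m1 else m0);
          b' \<leftarrow> A2 s c;
          return_pmf (b' = b) }"

definition rlwe_reduction ::
  "int \<Rightarrow> int \<Rightarrow> nat \<Rightarrow>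
   (int poly \<Rightarrow> (bool list \<times> bool list \<times> 's) pmf) \<Rightarrow> ('s \<Rightarrow> int poly \<Rightarrow> bool pmf) \<Rightarrow>
   int poly \<Rightarrow> int poly \<Rightarrow> bool pmf" where
  "rlwe_reduction q q2 n A1 A2 h \<sigma> =
     do { (m0, m1, s) \<leftarrow> A1 h;
          b \<leftarrow> bernoulli_pmf (1/2);
          b' \<leftarrow> A2 s (ctru_compress q q2 (\<sigma> + poly_encode_round q n (if b then m1 else m0)));
          return_pmf (b' = b) }"

end

theory Submission
  imports Defs
begin

lemma phi_coeff: "coeff (ctru_phi n) i = (if i = n then 1 else 0) - (if i = n div 2 then 1 else 0) + (if i = 0 then 1 else 0)"
  by (simp add: ctru_phi_def coeff_monom)

lemma degree_phi: assumes "n > 0" shows "degree (ctru_phi n) = n"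
proof (rule antisym)
  show "degree (ctru_phi n) \<le> n"
    by (rule degree_le) (auto simp: phi_coeff)
  have "coeff (ctru_phi n) n = 1" using assms by (simp add: phi_coeff)
  then show "n \<le> degree (ctru_phi n)" by (intro le_degree) simp
qed

lemma lead_phi: assumes "n > 0" shows "coeff (ctru_phi n) (degree (ctru_phi n)) = 1"
  using assms by (simp add: degree_phi phi_coeff)

lemma phi_nz: assumes "n > 0" shows "ctru_phi n \<noteq> 0"
  using lead_phi[OF assms] by auto

lemma degree_pmod: assumes "n > 0" shows "degree (pseudo_mod p (ctru_phi n)) < n"
proof -
  have "pseudo_mod p (ctru_phi n) = 0 \<or> degree (pseudo_mod p (ctru_phi n)) < degree (ctru_phi n)"
    using pseudo_mod(2)[OF phi_nz[OF assms]] by blast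
  then show ?thesis using assms degree_phi[OF assms] by auto
qed

lemma pmod_small: assumes "n > 0" "degree p < n" shows "pseudo_mod p (ctru_phi n) = p"
proof -
  obtain d r where pd: "pseudo_divmod p (ctru_phi n) = (d, r)" by (cases "pseudo_divmod p (ctru_phi n)")
  have r: "pseudo_mod p (ctru_phi n) = r" using pd by (simp add: pseudo_mod_def)
  have e: "p = ctru_phi n * d + r"
    using pseudo_divmod(1)[OF phi_nz[OF assms(1)] pd] lead_phi[OF assms(1)] by simp
  have dr: "r = 0 \<or> degree r < n"
    using pseudo_divmod(2)[OF phi_nz[OF assms(1)] pd] degree_phi[OF assms(1)] by simp
  have "d = 0"
  proof (rule ccontr)
    assume "d \<noteq> 0"
    then have "degree (ctru_phi n * d) \<ge> n"
      using degree_mult_eq[OF phi_nz[OF assms(1)]] degree_phi[OF assms(1)] by simp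
    moreover have "ctru_phi n * d = p - r" using e by simp
    moreover have "degree (p - r) < n" using dr assms(2)
      using degree_diff_le_max[of p r] by auto
    ultimately show False by simp
  qed
  then show ?thesis using e r by simp
qed

lemma degree_red: assumes "n > 0" shows "degree (rq_red q n p) < n"
  unfolding rq_red_def using map_poly_degree_leq[of "\<lambda>c. c mod q"] degree_pmod[OF assms]
  by (meson le_less_trans)

lemma coeff_red_small: "rq_red q n p = map_poly (\<lambda>c. c mod q) (pseudo_mod p (ctru_phi n))"
  by (simp add: rq_red_def)

lemma coeff_mapmod: "coeff (map_poly (\<lambda>c. c mod (q::int)) p) i = coeff p i mod q"
  by (rule coeff_map_poly) simp

lemma red_small: assumes "n > 0" "degree p < n" shows "rq_red q n p = map_poly (\<lambda>c. c mod q) p"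
  by (simp add: rq_red_def pmod_small assms)

lemma round_per: assumes "q > 0"
  shows "round (real_of_int q2 / real_of_int q * real_of_int (a mod q)) mod q2
       = round (real_of_int q2 / real_of_int q * real_of_int a) mod q2"
proof -
  have a: "real_of_int a = real_of_int (a mod q) + real_of_int q * real_of_int (a div q)"
    by (metis of_int_add of_int_mult mod_mult_div_eq)
  have "real_of_int q2 / real_of_int q * real_of_int a
      = real_of_int q2 / real_of_int q * real_of_int (a mod q) + of_int (q2 * (a div q))"
    using assms unfolding a by (simp add: field_simps)
  moreover have "round (x + of_int k) = round x + k" for x :: real and k
    unfolding round_def by (metis add.commute add.left_commute floor_add_int)
  ultimately have "round (real_of_int q2 / real_of_int q * real_of_int a)
     = round (real_of_int q2 / real_of_int q * real_of_int (a mod q)) + q2 * (a div q)" by metis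
  then show ?thesis by simp
qed

lemma compress_mod: assumes "q > 0"
  shows "ctru_compress q q2 (map_poly (\<lambda>c. c mod q) p) = ctru_compress q q2 p"
  unfolding ctru_compress_def
  by (rule poly_eqI) (simp only: coeff_mapmod coeff_map_poly[of "\<lambda>a. round (real_of_int q2 / real_of_int q * real_of_int a) mod q2"] round_per[OF assms] round_0 of_int_0 mult_zero_right mod_0)

lemma carrier_sub: assumes "n > 0" "q > 0"
  shows "rq_carrier q n \<subseteq> Poly ` {xs. set xs \<subseteq> {0..<q} \<and> length xs = n}"
proof
  fix p assume "p \<in> rq_carrier q n"
  then obtain x where p: "p = rq_red q n x" by (auto simp: rq_carrier_def)
  have d: "degree p < n" using p degree_red[OF assms(1)] by simp
  have c: "coeff p i \<in> {0..<q}" for i using p assms(2) by (simp add: rq_red_def coeff_mapmod)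
  have "p = Poly (map (coeff p) [0..<n])"
    by (rule poly_eqI) (use d in \<open>auto simp: nth_default_def coeff_eq_0\<close>)
  then show "p \<in> Poly ` {xs. set xs \<subseteq> {0..<q} \<and> length xs = n}" using c by force
qed

lemma carrier_finite: assumes "n > 0" "q > 0" shows "finite (rq_carrier q n)"
  by (rule finite_subset[OF carrier_sub[OF assms]])
     (intro finite_imageI finite_lists_length_eq, simp)

lemma carrier_props: assumes "n > 0" "q > 0" "u \<in> rq_carrier q n"
  shows "degree u < n" "coeff u i \<in> {0..<q}"
proof -
  obtain x where p: "u = rq_red q n x" using assms(3) by (auto simp: rq_carrier_def)
  show "degree u < n" using p degree_red[OF assms(1)] by simp
  show "coeff u i \<in> {0..<q}" using p assms(2) by (simp add: rq_red_def coeff_mapmod)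
qed

lemma degree_enc: assumes "n > 0" shows "degree (poly_encode_round q n m) < n"
proof -
  have "degree (poly_encode_round q n m) \<le> n - 1"
    by (rule degree_le) (auto simp: poly_encode_round_def nth_default_def)
  then show ?thesis using assms by simp
qed

lemma uniform_shift:
  assumes n: "n > 0" and q: "q > 0" and E: "degree E < n"
  shows "map_pmf (\<lambda>u. ctru_compress q q2 (u + E)) (rq_uniform q n)
       = map_pmf (ctru_compress q q2) (rq_uniform q n)"
proof -
  define C where "C = rq_carrier q n"
  define T where "T u = rq_red q n (u + E)" for u
  have fin: "finite C" and ne: "C \<noteq> {}"
    using carrier_finite[OF n q] by (auto simp: C_def rq_carrier_def)
  have Tu: "T u = map_poly (\<lambda>c. c mod q) (u + E)" if "u \<in> C" for u
    unfolding T_def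
    by (rule red_small[OF n]) (use carrier_props(1)[OF n q that[unfolded C_def]] E
        degree_add_le_max[of u E] in \<open>auto\<close>)
  have inj: "inj_on T C"
  proof (rule inj_onI)
    fix u v assume u: "u \<in> C" and v: "v \<in> C" and eq: "T u = T v"
    show "u = v"
    proof (rule poly_eqI)
      fix i
      have "(coeff u i + coeff E i) mod q = (coeff v i + coeff E i) mod q"
        using arg_cong[OF eq, of "\<lambda>p. coeff p i"] Tu[OF u] Tu[OF v] by (simp add: coeff_mapmod)
      then have "coeff u i mod q = coeff v i mod q"
        by (metis add_diff_cancel_right' mod_diff_left_eq)
      moreover have "coeff u i mod q = coeff u i" "coeff v i mod q = coeff v i"
        using carrier_props(2)[OF n q, of u i] carrier_props(2)[OF n q, of v i] u v
        by (auto simp: C_def)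
      ultimately show "coeff u i = coeff v i" by simp
    qed
  qed
  have sub: "T ` C \<subseteq> C" by (auto simp: T_def C_def rq_carrier_def)
  have img: "T ` C = C" by (rule endo_inj_surj[OF fin sub inj])
  have "map_pmf (\<lambda>u. ctru_compress q q2 (u + E)) (rq_uniform q n)
      = map_pmf (ctru_compress q q2 \<circ> T) (rq_uniform q n)"
    by (rule map_pmf_cong) (use fin ne in \<open>auto simp: rq_uniform_def C_def Tu compress_mod[OF q]\<close>)
  also have "\<dots> = map_pmf (ctru_compress q q2) (map_pmf T (pmf_of_set C))"
    by (simp add: map_pmf_comp rq_uniform_def C_def comp_def)
  also have "map_pmf T (pmf_of_set C) = pmf_of_set C"
    using map_pmf_of_set_inj[OF inj ne fin] img by simp
  finally show ?thesis by (simp add: rq_uniform_def C_def)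
qed


lemma comm3: "bind_pmf X (\<lambda>x. bind_pmf Y (\<lambda>y. bind_pmf Z (\<lambda>z. F x y z)))
  = bind_pmf Y (\<lambda>y. bind_pmf Z (\<lambda>z. bind_pmf X (\<lambda>x. F x y z)))"
proof -
  have "bind_pmf X (\<lambda>x. bind_pmf Y (\<lambda>y. bind_pmf Z (\<lambda>z. F x y z)))
      = bind_pmf Y (\<lambda>y. bind_pmf X (\<lambda>x. bind_pmf Z (\<lambda>z. F x y z)))"
    by (rule bind_commute_pmf)
  also have "\<dots> = bind_pmf Y (\<lambda>y. bind_pmf Z (\<lambda>z. bind_pmf X (\<lambda>x. F x y z)))"
    by (subst bind_commute_pmf) (rule refl)
  finally show ?thesis .
qed

lemma game0: "ind_cpa_game q q2 n \<Psi>1 \<Psi>2 A1 A2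
  = bind_pmf (map_pmf fst (ctru_keygen q n \<Psi>1)) (ntru_reduction q q2 n \<Psi>2 A1 A2)"
  unfolding ind_cpa_game_def ntru_reduction_def
  apply (simp add: bind_map_pmf)
  apply (rule bind_pmf_cong[OF refl])
  apply clarify
  apply simp
  done

lemma game1: "ntru_reduction q q2 n \<Psi>2 A1 A2 h
  = bind_pmf \<Psi>2 (\<lambda>r. bind_pmf \<Psi>2 (\<lambda>e. rlwe_reduction q q2 n A1 A2 h (rq_add q n (rq_mult q n h r) e)))"
proof -
  have "ntru_reduction q q2 n \<Psi>2 A1 A2 h = bind_pmf (A1 h) (\<lambda>x. bind_pmf \<Psi>2 (\<lambda>r. bind_pmf \<Psi>2 (\<lambda>e.
     bind_pmf (bernoulli_pmf (1/2)) (\<lambda>b. bind_pmf (A2 (snd (snd x)) (ctru_compress q q2 (rq_add q n (rq_mult q n h r) e + poly_encode_round q n (if b then fst (snd x) else fst x)))) (\<lambda>b'. return_pmf (b' = b))))))"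
    unfolding ntru_reduction_def ctru_enc_def
    apply (simp add: bind_assoc_pmf bind_return_pmf case_prod_beta Let_def)
    apply (rule bind_pmf_cong[OF refl])
    apply clarify
    apply (rule trans[OF comm3])
    apply (simp only: fst_conv snd_conv)
    done
  also have "\<dots> = bind_pmf \<Psi>2 (\<lambda>r. bind_pmf \<Psi>2 (\<lambda>e. bind_pmf (A1 h) (\<lambda>x.
     bind_pmf (bernoulli_pmf (1/2)) (\<lambda>b. bind_pmf (A2 (snd (snd x)) (ctru_compress q q2 (rq_add q n (rq_mult q n h r) e + poly_encode_round q n (if b then fst (snd x) else fst x)))) (\<lambda>b'. return_pmf (b' = b))))))"
    by (rule comm3)
  also have "\<dots> = bind_pmf \<Psi>2 (\<lambda>r. bind_pmf \<Psi>2 (\<lambda>e. rlwe_reduction q q2 n A1 A2 h (rq_add q n (rq_mult q n h r) e)))"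
    unfolding rlwe_reduction_def by (simp only: case_prod_unfold)
  finally show ?thesis .
qed


lemma bern_xor: "bind_pmf (bernoulli_pmf (1/2)) (\<lambda>b. return_pmf (c = b)) = bernoulli_pmf (1/2)"
  by (rule pmf_eqI) (auto simp: pmf_bind indicator_def)

lemma coin: "bind_pmf (bernoulli_pmf (1/2)) (\<lambda>b. bind_pmf D (\<lambda>b'. return_pmf (b' = b))) = bernoulli_pmf (1/2)"
  by (subst bind_commute_pmf) (simp add: bern_xor)

lemma game2:
  fixes A1 :: "int poly \<Rightarrow> (bool list \<times> bool list \<times> 's) pmf"
    and A2 :: "'s \<Rightarrow> int poly \<Rightarrow> bool pmf"
  assumes n: "n > 0" and q: "q > 0"
  shows "bind_pmf (rq_uniform q n) (rlwe_reduction q q2 n A1 A2 h) = bernoulli_pmf (1/2)"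
proof -
  define U where "U = rq_uniform q n"
  define D where "D x = bind_pmf (map_pmf (ctru_compress q q2) U) (A2 (snd (snd x)))" for x :: "bool list \<times> bool list \<times> 's"
  have "bind_pmf U (rlwe_reduction q q2 n A1 A2 h) = bind_pmf (A1 h) (\<lambda>x. bind_pmf (bernoulli_pmf (1/2)) (\<lambda>b.
     bind_pmf U (\<lambda>u. bind_pmf (A2 (snd (snd x)) (ctru_compress q q2 (u + poly_encode_round q n (if b then fst (snd x) else fst x)))) (\<lambda>b'. return_pmf (b' = b)))))"
    unfolding rlwe_reduction_def case_prod_unfold by (rule comm3)
  also have "\<dots> = bind_pmf (A1 h) (\<lambda>x. bind_pmf (bernoulli_pmf (1/2)) (\<lambda>b.
     bind_pmf (D x) (\<lambda>b'. return_pmf (b' = b))))"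
  proof (intro bind_pmf_cong refl)
    fix x :: "bool list \<times> bool list \<times> 's" and b :: bool
    let ?E = "poly_encode_round q n (if b then fst (snd x) else fst x)"
    have "bind_pmf U (\<lambda>u. bind_pmf (A2 (snd (snd x)) (ctru_compress q q2 (u + ?E))) (\<lambda>b'. return_pmf (b' = b)))
        = bind_pmf (bind_pmf (map_pmf (\<lambda>u. ctru_compress q q2 (u + ?E)) U) (A2 (snd (snd x)))) (\<lambda>b'. return_pmf (b' = b))"
      by (simp add: bind_assoc_pmf bind_map_pmf)
    also have "map_pmf (\<lambda>u. ctru_compress q q2 (u + ?E)) U = map_pmf (ctru_compress q q2) U"
      unfolding U_def by (rule uniform_shift[OF n q degree_enc[OF n]])
    finally show "bind_pmf U (\<lambda>u. bind_pmf (A2 (snd (snd x)) (ctru_compress q q2 (u + ?E))) (\<lambda>b'. return_pmf (b' = b)))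
        = bind_pmf (D x) (\<lambda>b'. return_pmf (b' = b))" by (simp add: D_def)
  qed
  also have "\<dots> = bernoulli_pmf (1/2)" by (simp add: coin)
  finally show ?thesis by (simp add: U_def)
qed

theorem theorem4:
  fixes l e n :: nat and q q2 :: int and \<Psi>1 \<Psi>2 :: "int poly pmf"
    and A1 :: "int poly \<Rightarrow> (bool list \<times> bool list \<times> 's) pmf"
    and A2 :: "'s \<Rightarrow> int poly \<Rightarrow> bool pmf"
  assumes "n = 3 ^ l * 2 ^ e" and "8 dvd n"
    and "0 < q2" and "q2 < q" and "gcd q 2 = 1"
    and "\<forall>pk. \<forall>(m0, m1, s) \<in> set_pmf (A1 pk). length m0 = n div 2 \<and> length m1 = n div 2"
  shows "adv_ind_cpa q q2 n \<Psi>1 \<Psi>2 A1 A2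
           \<le> adv_ntru q n \<Psi>1 (ntru_reduction q q2 n \<Psi>2 A1 A2)
             + adv_rlwe q n \<Psi>2 (rlwe_reduction q q2 n A1 A2)"
proof -
  have n: "n > 0" using assms(1) by simp
  have q: "q > 0" using assms(3,4) by simp
  define P0 where "P0 = pmf (bind_pmf (map_pmf fst (ctru_keygen q n \<Psi>1)) (ntru_reduction q q2 n \<Psi>2 A1 A2)) True"
  define P1 where "P1 = pmf (bind_pmf (rq_uniform q n) (ntru_reduction q q2 n \<Psi>2 A1 A2)) True"
  have e1: "bind_pmf (rq_uniform q n) (ntru_reduction q q2 n \<Psi>2 A1 A2)
    = do { h \<leftarrow> rq_uniform q n; r \<leftarrow> \<Psi>2; e \<leftarrow> \<Psi>2;
                rlwe_reduction q q2 n A1 A2 h (rq_add q n (rq_mult q n h r) e) }"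
    by (rule bind_pmf_cong[OF refl]) (rule game1)
  have e2: "do { h \<leftarrow> rq_uniform q n; u \<leftarrow> rq_uniform q n; rlwe_reduction q q2 n A1 A2 h u } = bernoulli_pmf (1/2)"
    by (simp add: game2[OF n q])
  have a0: "adv_ind_cpa q q2 n \<Psi>1 \<Psi>2 A1 A2 = \<bar>P0 - 1/2\<bar>"
    by (simp add: adv_ind_cpa_def game0 P0_def)
  have a1: "adv_ntru q n \<Psi>1 (ntru_reduction q q2 n \<Psi>2 A1 A2) = \<bar>P0 - P1\<bar>"
    by (simp add: adv_ntru_def P0_def P1_def)
  have a2: "adv_rlwe q n \<Psi>2 (rlwe_reduction q q2 n A1 A2) = \<bar>P1 - 1/2\<bar>"
    unfolding adv_rlwe_def e2 P1_def e1 by simp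
  show ?thesis unfolding a0 a1 a2 by linarith
qed

end
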